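(* Let $I\subseteq\mathbb{R}$ be an interval, let $f:I\to\mathbb{R}$ be differentiable on the interior $I^\circ$ of $I$, and let $a,b\in I$ with $a<b$ and $f'\in L^1[a,b]$. Let $s\in(0,1]$, $\alpha\in[0,1]$, $m\in(0,1]$, assume $b/m\in I^\circ$, and let $p>1$ and $q=\frac{p}{p-1}$. If $|f'|^q$ is $s$-$(\alpha,m)$-convex (in the first sense) on $[a,b]$, then $$\left|\frac{f(a)+f(b)}{2}-\frac{1}{b-a}\int_a^b f(x)\,dx\right|\le (b-a)\left[\frac{2}{(p+1)(p+2)}\right]^{1/p}\left(\frac{|f'(a)|^q+m\alpha s\left|f'\!\left(\frac{b}{m}\right)\right|^q}{\alpha s+1}\right)^{1/q}.$$
   Context: Let $s\in(0,1]$, $\alpha\in[0,1]$, $m\in(0,1]$. A nonnegative function $g$ is called $s$-$(\alpha,m)$-convex (in the first sense) on $[a,b]$ if for all $x,y\in[a,b]$ (with $y/m$ in the domain of $g$) and all $t\in[0,1]$, $$g(tx+(1-t)y)\le t^{\alpha s}g(x)+m\,(1-t^{\alpha s})\,g\!\left(\frac{y}{m}\right).$$ *)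

theory Defs
  imports "HOL-Analysis.Analysis"
begin

text \<open>Real power t^e with the convention t^0 = 1 (also for t = 0); for e > 0 and
  t >= 0 this is the usual power t powr e.\<close>
definition rpow :: "real \<Rightarrow> real \<Rightarrow> real" where
  "rpow t e = (if e = 0 then 1 else t powr e)"

text \<open>s-(alpha,m)-convexity in the first sense of a nonnegative function g on [a,b],
  where D is the domain of g (the condition is required whenever y/m lies in D).\<close>
definition s_alpha_m_convex ::
  "real \<Rightarrow> real \<Rightarrow> real \<Rightarrow> (real \<Rightarrow> real) \<Rightarrow> real set \<Rightarrow> real \<Rightarrow> real \<Rightarrow> bool" where
  "s_alpha_m_convex s \<alpha> m g D a b \<longleftrightarrow>
     (\<forall>x\<in>{a..b}. 0 \<le> g x) \<and>
     (\<forall>x\<in>{a..b}. \<forall>y\<in>{a..b}. y / m \<in> D \<longrightarrow> (\<forall>t\<in>{0..1}.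
        g (t * x + (1 - t) * y) \<le> rpow t (\<alpha> * s) * g x + m * (1 - rpow t (\<alpha> * s)) * g (y / m)))"

end

theory Submission
  imports Defs
begin

lemma L: "b \<noteq> (a::real) \<Longrightarrow> 0 < (r::real) \<Longrightarrow> - (b - a)/(r+1) * ((r + 1) * T * (-1 / (b - a))) = T"
proof -
  assume "b \<noteq> a" "0 < r"
  then have 1: "(b - a) * inverse (b-a) = 1" "(r + 1) * inverse (r+1) = 1" by auto
  have "- (b - a)/(r+1) * ((r + 1) * T * (-1 / (b - a))) = ((b - a)*inverse(b-a)) * ((r + 1) * inverse(r+1)) * T"
    unfolding divide_inverse by (simp only: mult_ac mult_minus_left mult_minus_right minus_minus mult_1_left)
  then show ?thesis using 1 by simp
qed

lemma powr_right_int: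
  fixes c b p :: real
  assumes "c < b" "0 < p"
  shows "((\<lambda>x. \<bar>x - c\<bar> powr p) has_integral ((b - c) powr (p + 1) / (p + 1))) {c..b}"
proof -
  have "((\<lambda>x. \<bar>x - c\<bar> powr p) has_integral ((\<lambda>x. (x - c) powr (p + 1) / (p + 1)) b - (\<lambda>x. (x - c) powr (p + 1) / (p + 1)) c)) {c..b}"
  proof (rule fundamental_theorem_of_calculus_interior)
    show "continuous_on {c..b} (\<lambda>x. (x - c) powr (p + 1) / (p + 1))"
      using assms by (intro continuous_intros continuous_on_powr') auto
    fix x assume x: "x \<in> {c<..<b}"
    have "((\<lambda>x. (x - c) powr (p + 1) / (p + 1)) has_real_derivative
           ((p + 1) * (x - c) powr (p + 1 - 1) * 1 / (p + 1))) (at x)"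
      using x assms by (intro derivative_eq_intros DERIV_fun_powr) auto
    then show "((\<lambda>x. (x - c) powr (p + 1) / (p + 1)) has_vector_derivative \<bar>x - c\<bar> powr p) (at x)"
      using x assms by (simp add: has_real_derivative_iff_has_vector_derivative[symmetric])
  qed (use assms in auto)
  then show ?thesis by simp
qed

lemma powr_left_int:
  fixes a c p :: real
  assumes "a < c" "0 < p"
  shows "((\<lambda>x. \<bar>x - c\<bar> powr p) has_integral ((c - a) powr (p + 1) / (p + 1))) {a..c}"
proof -
  define G where "G = (\<lambda>x. - ((c - x) powr (p + 1)) / (p + 1))"
  have "((\<lambda>x. \<bar>x - c\<bar> powr p) has_integral (G c - G a)) {a..c}"
  proof (rule fundamental_theorem_of_calculus_interior)
    show "continuous_on {a..c} G"
      using assms unfolding G_def by (intro continuous_intros continuous_on_powr') auto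
    fix x assume x: "x \<in> {a<..<c}"
    have "(G has_real_derivative
           (- ((p + 1) * (c - x) powr (p + 1 - 1) * (0 - 1)) / (p + 1))) (at x)"
      using x assms unfolding G_def by (intro derivative_eq_intros DERIV_fun_powr) auto
    then show "(G has_vector_derivative \<bar>x - c\<bar> powr p) (at x)"
      using x assms by (simp add: has_real_derivative_iff_has_vector_derivative[symmetric] abs_minus_commute)
  qed (use assms in auto)
  then show ?thesis by (simp add: G_def)
qed

lemma dist_powr_int:
  fixes a b p :: real
  assumes "a < b" "0 < p"
  shows "((\<lambda>x. \<bar>x - (a+b)/2\<bar> powr p) has_integral (2 * ((b - a)/2) powr (p + 1) / (p + 1))) {a..b}"
proof -
  have 1: "((\<lambda>x. \<bar>x - (a+b)/2\<bar> powr p) has_integral (((b - a)/2) powr (p + 1) / (p + 1))) {a..(a+b)/2}"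
    using powr_left_int[of a "(a+b)/2" p] assms by (simp add: field_simps)
  have 2: "((\<lambda>x. \<bar>x - (a+b)/2\<bar> powr p) has_integral (((b - a)/2) powr (p + 1) / (p + 1))) {(a+b)/2..b}"
    using powr_right_int[of "(a+b)/2" b p] assms by (simp add: field_simps)
  have "((\<lambda>x. \<bar>x - (a+b)/2\<bar> powr p) has_integral (((b - a)/2) powr (p + 1) / (p + 1) + ((b - a)/2) powr (p + 1) / (p + 1))) {a..b}"
    by (rule has_integral_combine[OF _ _ 1 2]) (use assms in auto)
  then show ?thesis by simp
qed

lemma rpow_int:
  fixes a b r :: real
  assumes "a < b" "0 \<le> r"
  shows "((\<lambda>x. rpow ((b - x)/(b - a)) r) has_integral ((b - a)/(r + 1))) {a..b}"
proof (cases "r = 0")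
  case True
  then show ?thesis using has_integral_const_real[of "1::real" a b] assms by (simp add: rpow_def)
next
  case False
  hence r: "0 < r" using assms by auto
  let ?G = "\<lambda>x. - (b - a)/(r+1) * ((b - x)/(b - a)) powr (r + 1)"
  have "((\<lambda>x. rpow ((b - x)/(b - a)) r) has_integral (?G b - ?G a)) {a..b}"
  proof (rule fundamental_theorem_of_calculus_interior)
    show "continuous_on {a..b} ?G"
      using assms by (intro continuous_intros continuous_on_powr') auto
    fix x assume x: "x \<in> {a<..<b}"
    have d1: "((\<lambda>x. (b-x)/(b-a)) has_real_derivative (-1/(b-a))) (at x)"
      using DERIV_cdivide[OF DERIV_diff[OF DERIV_const DERIV_ident], where c="b - a"] by simp
    have pos: "(b-x)/(b-a) > 0" using x by auto
    have "(?G has_real_derivative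
           (- (b - a)/(r+1) * ((r + 1) * ((b - x)/(b - a)) powr (r + 1 - of_nat 1) * (-1 / (b - a))))) (at x)"
      by (rule DERIV_cmult[OF DERIV_fun_powr[OF d1 pos]])
    then show "(?G has_vector_derivative rpow ((b - x)/(b - a)) r) (at x)"
    proof -
      have ba: "b - a \<noteq> 0" using assms by auto
      have "- (b - a)/(r+1) * ((r + 1) * ((b - x)/(b - a)) powr (r + 1 - of_nat 1) * (-1 / (b - a)))
          = ((b - x)/(b - a)) powr r"
        using L[of b a r] assms r by simp
      then show ?thesis using \<open>(?G has_real_derivative _) _\<close> r
        by (simp add: has_real_derivative_iff_has_vector_derivative[symmetric] rpow_def)
    qed
  qed (use assms in auto)
  moreover have "- ((a - b) / (r + 1)) = (b - a)/(r+1)" by (simp add: minus_divide_left)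
  ultimately show ?thesis using assms by simp
qed
lemma const_ineq:
  fixes p :: real assumes p: "1 < p"
  shows "(1/(p+1)) powr (1/p) / 2 \<le> (2/((p+1)*(p+2))) powr (1/p)"
proof -
  have "2 powr p = exp (p * ln 2)" by (simp add: powr_def)
  also have "\<dots> \<ge> 1 + p * ln 2" by (rule exp_ge_add_one_self)
  finally have e: "2 powr p \<ge> 1 + p * ln 2" .
  have "p * ln 2 \<ge> p * (2/3)" using ln2_ge_two_thirds p by (intro mult_left_mono) auto
  with e have e2: "2 powr p \<ge> 1 + p * (2/3)" by linarith
  have key: "1/(p+1) \<le> 2/((p+1)*(p+2)) * 2 powr p"
  proof -
    have "p + 2 \<le> 2 * 2 powr p" using e2 p by linarith
    hence "1 \<le> 2 * 2 powr p / (p+2)" using p by (simp add: le_divide_eq)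
    hence "1 * (1/(p+1)) \<le> (2 * 2 powr p / (p+2)) * (1/(p+1))" using p by (intro mult_right_mono) auto
    also have "\<dots> = 2/((p+1)*(p+2)) * 2 powr p" by simp
    finally show ?thesis by simp
  qed
  have "(1/(p+1)) powr (1/p) \<le> (2/((p+1)*(p+2)) * 2 powr p) powr (1/p)"
    using key p by (intro powr_mono2) auto
  also have "\<dots> = (2/((p+1)*(p+2))) powr (1/p) * (2 powr p) powr (1/p)"
    by (simp only: powr_mult)
  also have "(2 powr p) powr (1/p) = (2::real)" using p by (simp add: powr_powr)
  finally show ?thesis by simp
qed

theorem theorem5:
  fixes f :: "real \<Rightarrow> real" and I :: "real set"
    and a b s \<alpha> m p q :: real
  assumes "is_interval I"
    and "\<forall>x\<in>interior I. f differentiable (at x)"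
    and "a \<in> interior I" and "b \<in> interior I" and "a < b"
    and "set_integrable lborel {a..b} (deriv f)"
    and "0 < s" and "s \<le> 1" and "0 \<le> \<alpha>" and "\<alpha> \<le> 1" and "0 < m" and "m \<le> 1"
    and "b / m \<in> interior I"
    and "1 < p" and "q = p / (p - 1)"
    and "s_alpha_m_convex s \<alpha> m (\<lambda>x. \<bar>deriv f x\<bar> powr q) (interior I) a b"
  shows "\<bar>(f a + f b) / 2 - (1 / (b - a)) * integral {a..b} f\<bar>
    \<le> (b - a) * (2 / ((p + 1) * (p + 2))) powr (1 / p)
       * ((\<bar>deriv f a\<bar> powr q + m * \<alpha> * s * \<bar>deriv f (b / m)\<bar> powr q) / (\<alpha> * s + 1))
         powr (1 / q)"
proof -
  note ab = \<open>a < b\<close>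
  have p: "1 < p" by fact
  have q1: "1 < q" using p by (subst assms(15)) (simp add: less_divide_eq)
  have pq: "1/p + 1/q = 1"
  proof -
    have "1/q = (p - 1)/p" using p by (subst assms(15)) simp
    then show ?thesis using p by (simp add: field_simps)
  qed
  define c where "c = (a + b) / 2"
  define r where "r = \<alpha> * s"
  define A0 where "A0 = \<bar>deriv f a\<bar> powr q"
  define B0 where "B0 = \<bar>deriv f (b / m)\<bar> powr q"
  define K where "K = (A0 + m * r * B0) / (r + 1)"
  define u where "u = (\<lambda>x. rpow ((b - x)/(b - a)) r)"
  define h where "h = (\<lambda>x. u x * A0 + m * (1 - u x) * B0)"
  have r0: "0 \<le> r" unfolding r_def using assms by simp
  have A0: "0 \<le> A0" "0 \<le> B0" unfolding A0_def B0_def by auto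
  have K0: "0 \<le> K" unfolding K_def using A0 r0 \<open>0 < m\<close> by (intro divide_nonneg_pos) auto
  have RHS: "(\<bar>deriv f a\<bar> powr q + m * \<alpha> * s * \<bar>deriv f (b / m)\<bar> powr q) / (\<alpha> * s + 1) = K"
    unfolding K_def A0_def B0_def r_def by (simp add: mult.assoc)
  have S: "{a..b} \<subseteq> interior I"
  proof -
    have "convex (interior I)" using assms(1) by (simp add: is_interval_convex convex_interior)
    then have "closed_segment a b \<subseteq> interior I"
      using assms(3,4) by (simp add: closed_segment_subset)
    then show ?thesis using ab by (simp add: closed_segment_eq_real_ivl)
  qed
  have der: "(f has_real_derivative deriv f x) (at x)" if "x \<in> {a..b}" for x
    using assms(2) S that by (auto simp: DERIV_deriv_iff_real_differentiable)
  have contf: "continuous_on {a..b} f"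
    by (intro continuous_at_imp_continuous_on ballI DERIV_isCont[OF der])
  define g where "g = (\<lambda>x. (x - c) * deriv f x)"
  have F: "((\<lambda>x. f x + g x) has_integral ((b - c) * f b - (a - c) * f a)) {a..b}"
  proof -
    have "((\<lambda>x. f x + g x) has_integral ((\<lambda>x. (x - c) * f x) b - (\<lambda>x. (x - c) * f x) a)) {a..b}"
    proof (rule fundamental_theorem_of_calculus_interior)
      show "continuous_on {a..b} (\<lambda>x. (x - c) * f x)" by (intro continuous_intros contf)
      fix x assume x: "x \<in> {a<..<b}"
      have xab: "x \<in> {a..b}" using x by auto
      have "((\<lambda>x. (x - c) * f x) has_real_derivative ((1 - 0) * f x + deriv f x * (x - c))) (at x)"
        by (rule DERIV_mult[OF DERIV_diff[OF DERIV_ident DERIV_const] der[OF xab]])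
      then show "((\<lambda>x. (x - c) * f x) has_vector_derivative f x + g x) (at x)"
        by (simp add: g_def mult.commute has_real_derivative_iff_has_vector_derivative[symmetric])
    qed (use ab in auto)
    then show ?thesis by simp
  qed
  have fint: "(f has_integral integral {a..b} f) {a..b}"
    using integrable_continuous_interval[OF contf] by (simp add: integrable_integral)
  define J where "J = (b - c) * f b - (a - c) * f a - integral {a..b} f"
  have gJ: "(g has_integral J) {a..b}"
    using has_integral_diff[OF F fint] unfolding J_def by simp
  have gint: "g integrable_on {a..b}" and gJ': "integral {a..b} g = J"
    using gJ by (auto simp: has_integral_integrable_integral)
  have LHS: "(f a + f b) / 2 - (1 / (b - a)) * integral {a..b} f = J / (b - a)"
    using ab unfolding J_def c_def by (simp add: field_simps)
  have hb: "\<bar>deriv f x\<bar> powr q \<le> h x" if x: "x \<in> {a..b}" for x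
  proof -
    define t where "t = (b - x)/(b - a)"
    have t: "t \<in> {0..1}" using x ab unfolding t_def by (auto simp: field_simps)
    have tx: "t * a + (1 - t) * b = x"
    proof -
      have "t * (b - a) = b - x" using ab unfolding t_def by simp
      moreover have "t * a + (1 - t) * b = b - t * (b - a)" by (simp add: algebra_simps)
      ultimately show ?thesis by simp
    qed
    have "\<bar>deriv f (t * a + (1 - t) * b)\<bar> powr q
        \<le> rpow t (\<alpha> * s) * \<bar>deriv f a\<bar> powr q + m * (1 - rpow t (\<alpha> * s)) * \<bar>deriv f (b / m)\<bar> powr q"
      using assms(16) ab t assms(13) unfolding s_alpha_m_convex_def by auto
    then show ?thesis using tx unfolding h_def u_def A0_def B0_def r_def t_def by simp
  qed
  have hH: "(h has_integral ((b - a) * K)) {a..b}"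
  proof -
    have "((\<lambda>x. (A0 - m * B0) * u x + m * B0) has_integral ((A0 - m * B0) * ((b - a)/(r+1)) + (b - a) * (m * B0))) {a..b}"
      by (intro has_integral_add has_integral_mult_right)
        (use rpow_int[OF ab r0] has_integral_const_real[of "m * B0" a b] ab in \<open>auto simp: u_def\<close>)
    moreover have "(A0 - m * B0) * ((b - a)/(r+1)) + (b - a) * (m * B0) = (b - a) * K"
      using r0 unfolding K_def by (simp add: field_simps)
    moreover have "(\<lambda>x. (A0 - m * B0) * u x + m * B0) = h"
      unfolding h_def by (auto simp: algebra_simps)
    ultimately show ?thesis by simp
  qed
  show ?thesis
  proof (cases "K = 0")
    case True
    have h0: "h x = 0" for x
    proof -
      have "A0 + m * r * B0 = 0" using True r0 unfolding K_def by simp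
      moreover have "0 \<le> m * r * B0" using A0 r0 \<open>0 < m\<close> by simp
      ultimately have "A0 = 0" "m * r * B0 = 0" using A0 by linarith+
      then have "A0 = 0" "r = 0 \<or> B0 = 0" using \<open>0 < m\<close> by auto
      then show ?thesis unfolding h_def u_def by (auto simp: rpow_def)
    qed
    have "g x = 0" if "x \<in> {a..b}" for x
    proof -
      have "\<bar>deriv f x\<bar> powr q \<le> 0" using hb[OF that] h0 by simp
      then have "deriv f x = 0" by (smt (verit) powr_gt_zero)
      then show ?thesis by (simp add: g_def)
    qed
    then have "J = 0" using gJ' by (metis integral_cong integral_0)
    then show ?thesis unfolding LHS RHS using True by simp
  next
    case False
    with K0 have Kp: "0 < K" by simp
    define P where "P = 2 * ((b - a)/2) powr (p + 1) / (p + 1)"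
    define H where "H = (b - a) * K"
    define A where "A = P powr (1/p)"
    define B where "B = H powr (1/q)"
    have Pp: "0 < P" unfolding P_def using ab p by simp
    have Hp: "0 < H" unfolding H_def using ab Kp by simp
    have Ap: "0 < A" "A powr p = P" unfolding A_def using Pp p by (auto simp: powr_powr)
    have Bp: "0 < B" "B powr q = H" unfolding B_def using Hp q1 by (auto simp: powr_powr)
    define bnd where "bnd = (\<lambda>x. A * B / (p * P) * \<bar>x - c\<bar> powr p + A * B / (q * H) * h x)"
    have bint: "(bnd has_integral (A * B)) {a..b}"
    proof -
      have "(bnd has_integral (A * B / (p * P) * P + A * B / (q * H) * H)) {a..b}"
        unfolding bnd_def P_def c_def
        by (intro has_integral_add has_integral_mult_right dist_powr_int hH[folded H_def]) (use ab p in auto)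
      moreover have "A * B / (p * P) * P + A * B / (q * H) * H = A * B"
      proof -
        have "A * B / (p * P) * P + A * B / (q * H) * H = A * B * (1/p + 1/q)"
          using Pp Hp by (simp add: distrib_left)
        then show ?thesis using pq by simp
      qed
      ultimately show ?thesis by simp
    qed
    have pw: "norm (g x) \<le> bnd x" if x: "x \<in> {a..b}" for x
    proof -
      have "norm (g x) = A * B * ((\<bar>x - c\<bar> / A) * (\<bar>deriv f x\<bar> / B))"
        using Ap Bp by (simp add: g_def abs_mult)
      also have "\<dots> \<le> A * B * ((\<bar>x - c\<bar> / A) powr p / p + (\<bar>deriv f x\<bar> / B) powr q / q)"
        using Ap Bp p q1 pq by (intro mult_left_mono Youngs_inequality) auto
      also have "(\<bar>x - c\<bar> / A) powr p = \<bar>x - c\<bar> powr p / P"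
        using Ap by (simp add: powr_divide)
      also have "(\<bar>deriv f x\<bar> / B) powr q = \<bar>deriv f x\<bar> powr q / H"
        using Bp by (simp add: powr_divide)
      also have "A * B * (\<bar>x - c\<bar> powr p / P / p + \<bar>deriv f x\<bar> powr q / H / q)
          \<le> A * B * (\<bar>x - c\<bar> powr p / P / p + h x / H / q)"
        using hb[OF x] Ap Bp Hp q1 by (intro mult_left_mono add_left_mono divide_right_mono) auto
      also have "\<dots> = bnd x" unfolding bnd_def using Pp Hp p q1 by (simp add: field_simps)
      finally show ?thesis .
    qed
    have JAB: "\<bar>J\<bar> \<le> A * B"
      using integral_norm_bound_integral[OF gint has_integral_integrable[OF bint] pw] gJ' bint
      by (simp add: integral_unique)
    define X where "X = (b - a) / 2"
    have Xp: "0 < X" unfolding X_def using ab by simp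
    have P2: "P = X powr p * ((b - a) * (1/(p+1)))"
    proof -
      have "X powr (p + 1) = X powr p * X" using Xp by (simp add: powr_add)
      then show ?thesis unfolding P_def X_def[symmetric] using p by (simp add: X_def field_simps)
    qed
    have A2: "A = X * ((b - a) powr (1/p) * (1/(p+1)) powr (1/p))"
    proof -
      have "A = (X powr p) powr (1/p) * ((b - a) powr (1/p) * (1/(p+1)) powr (1/p))"
        unfolding A_def P2 by (simp only: powr_mult)
      moreover have "(X powr p) powr (1/p) = X" using Xp p by (simp add: powr_powr)
      ultimately show ?thesis by simp
    qed
    have B2: "B = (b - a) powr (1/q) * K powr (1/q)"
      unfolding B_def H_def by (simp add: powr_mult)
    have ba: "(b - a) powr (1/p) * (b - a) powr (1/q) = b - a"
      using ab pq by (simp add: powr_add[symmetric])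
    have AB: "A * B / (b - a) = (b - a) * ((1/(p+1)) powr (1/p) / 2) * K powr (1/q)"
    proof -
      have "A * B = X * ((b - a) powr (1/p) * (b - a) powr (1/q)) * (1/(p+1)) powr (1/p) * K powr (1/q)"
        unfolding A2 B2 by (simp add: mult_ac)
      also have "\<dots> = X * (b - a) * (1/(p+1)) powr (1/p) * K powr (1/q)" by (simp add: ba)
      finally show ?thesis using ab unfolding X_def by (simp add: field_simps)
    qed
    have "\<bar>J / (b - a)\<bar> \<le> A * B / (b - a)"
      using JAB ab by (simp add: divide_right_mono)
    also have "\<dots> \<le> (b - a) * (2 / ((p + 1) * (p + 2))) powr (1 / p) * K powr (1/q)"
      unfolding AB using const_ineq[OF p] ab
      by (intro mult_right_mono mult_left_mono) auto
    finally show ?thesis unfolding LHS RHS .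
  qed
qed

end
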